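(* Let $\rho_{AB}$ be an arbitrary two-qubit state (a density operator on $\mathbb{C}^2\otimes\mathbb{C}^2$) shared between Alice (system $A$) and Bob (system $B$). Let $\rho_A=\operatorname{Tr}_B[\rho_{AB}]$ and $\rho_B=\operatorname{Tr}_A[\rho_{AB}]$, and let $\mathbb{I}$ denote the $2\times 2$ identity. For $\mu_1,\mu_2\in[0,\tfrac{1}{\sqrt{3}}]$ define $$\tau^1_{AB}=\mu_1\,\rho_{AB}+(1-\mu_1)\,\rho_A\otimes\tfrac{\mathbb{I}}{2},\qquad \tau^2_{AB}=\mu_2\,\rho_{AB}+(1-\mu_2)\,\tfrac{\mathbb{I}}{2}\otimes\rho_B .$$ Then: (i) if $\tau^1_{AB}$ is entangled, $\rho_{AB}$ is EPR steerable from Bob to Alice; (ii) if $\tau^2_{AB}$ is entangled, $\rho_{AB}$ is EPR steerable from Alice to Bob.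
   Context: Measurements: Alice performs arbitrary measurements $A$ given by POVMs $\{M^A_a\}_a$ ($M^A_a\ge 0$, $\sum_a M^A_a=\mathbb{I}$), Bob performs arbitrary measurements $B$ given by POVMs $\{M^B_b\}_b$. On a state $\rho_{AB}$ the joint probabilities are $P(a,b|A,B,\rho_{AB})=\operatorname{Tr}[(M^A_a\otimes M^B_b)\rho_{AB}]$. For a state $\sigma$, $P_Q(a|A,\sigma)=\operatorname{Tr}[\sigma M^A_a]$ (similarly for Bob). Steering: $\rho_{AB}$ is NOT EPR steerable from Bob to Alice iff there exist a probability distribution $P(\lambda)$ over hidden variables $\lambda$, quantum states $\rho^A_\lambda$ on Alice's system, and arbitrary conditional probability distributions $P(b|B,\lambda)$ such that for all measurements $A,B$ and outcomes $a,b$: $P(a,b|A,B,\rho_{AB})=\sum_\lambda P(\lambda)\,P_Q(a|A,\rho^A_\lambda)\,P(b|B,\lambda)$; otherwise it is EPR steerable from Bob to Alice. Symmetrically, $\rho_{AB}$ is NOT EPR steerable from Alice to Bob iff for all $A,B,a,b$: $P(a,b|A,B,\rho_{AB})=\sum_\lambda P(\lambda)\,P(a|A,\lambda)\,P_Q(b|B,\rho^B_\lambda)$ with $P(a|A,\lambda)$ arbitrary distributions and $\rho^B_\lambda$ quantum states of Bob's system; otherwise it is EPR steerable from Alice to Bob. Entanglement: a bipartite state is separable if it can be written as $\sum_\lambda P(\lambda)\rho^A_\lambda\otimes\rho^B_\lambda$ (equivalently, its statistics for all local measurements admit the form $\sum_\lambda P(\lambda)P_Q(a|A,\rho^A_\lambda)P_Q(b|B,\rho^B_\lambda)$),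 and entangled otherwise. *)

theory Defs
  imports "HOL-Analysis.Analysis"
begin

text \<open>Qubit operators: 2x2 complex matrices; two-qubit operators: matrices indexed by 2 \<times> 2
  (the computational basis of C^2 \<otimes> C^2).\<close>

type_synonym cmat2 = "complex^2^2"
type_synonym cmat4 = "complex^(2 \<times> 2)^(2 \<times> 2)"

definition ctrace :: "complex^'n^'n \<Rightarrow> complex" where
  "ctrace A = (\<Sum>i\<in>UNIV. A $ i $ i)"

definition psd :: "complex^'n^'n \<Rightarrow> bool" where
  "psd M \<longleftrightarrow> (\<forall>x::complex^'n.
      Im ((\<Sum>i\<in>UNIV. cnj (x $ i) * (M *v x) $ i)) = 0 \<and>
      Re ((\<Sum>i\<in>UNIV. cnj (x $ i) * (M *v x) $ i)) \<ge> 0)"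

definition density :: "complex^'n^'n \<Rightarrow> bool" where
  "density \<rho> \<longleftrightarrow> psd \<rho> \<and> ctrace \<rho> = 1"

definition kron :: "cmat2 \<Rightarrow> cmat2 \<Rightarrow> cmat4" where
  "kron A B = (\<chi> p q. A $ fst p $ fst q * B $ snd p $ snd q)"

definition ptraceB :: "cmat4 \<Rightarrow> cmat2" where
  "ptraceB \<rho> = (\<chi> i j. \<Sum>k\<in>UNIV. \<rho> $ (i,k) $ (j,k))"

definition ptraceA :: "cmat4 \<Rightarrow> cmat2" where
  "ptraceA \<rho> = (\<chi> k l. \<Sum>i\<in>UNIV. \<rho> $ (i,k) $ (i,l))"

definition povm :: "nat \<Rightarrow> (nat \<Rightarrow> cmat2) \<Rightarrow> bool" where
  "povm n M \<longleftrightarrow> (\<forall>a<n. psd (M a)) \<and> (\<Sum>a<n. M a) = mat 1"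

definition Pjoint :: "cmat2 \<Rightarrow> cmat2 \<Rightarrow> cmat4 \<Rightarrow> real" where
  "Pjoint MA MB \<rho> = Re (ctrace (kron MA MB ** \<rho>))"

definition PQ :: "cmat2 \<Rightarrow> cmat2 \<Rightarrow> real" where
  "PQ \<sigma> M = Re (ctrace (\<sigma> ** M))"

text \<open>Discrete probability distribution over the hidden variables (indexed by nat; any
  discrete distribution has countable support).\<close>
definition hv_dist :: "(nat \<Rightarrow> real) \<Rightarrow> bool" where
  "hv_dist P \<longleftrightarrow> (\<forall>l. 0 \<le> P l) \<and> P sums 1"

text \<open>Arbitrary response function: r n M b l = P(b | measurement (n,M), \<lambda> = l).\<close>
definition response :: "(nat \<Rightarrow> (nat \<Rightarrow> cmat2) \<Rightarrow> nat \<Rightarrow> nat \<Rightarrow> real) \<Rightarrow> bool" where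
  "response r \<longleftrightarrow> (\<forall>n M l. povm n M \<longrightarrow> (\<forall>b<n. 0 \<le> r n M b l) \<and> (\<Sum>b<n. r n M b l) = 1)"

definition not_steerable_BA :: "cmat4 \<Rightarrow> bool" where
  "not_steerable_BA \<rho> \<longleftrightarrow> (\<exists>P \<sigma> r. hv_dist P \<and> (\<forall>l. density (\<sigma> l)) \<and> response r \<and>
     (\<forall>nA MA nB MB a b. povm nA MA \<longrightarrow> povm nB MB \<longrightarrow> a < nA \<longrightarrow> b < nB \<longrightarrow>
        (\<lambda>l. P l * PQ (\<sigma> l) (MA a) * r nB MB b l) sums Pjoint (MA a) (MB b) \<rho>))"

definition steerable_BA :: "cmat4 \<Rightarrow> bool" where
  "steerable_BA \<rho> \<longleftrightarrow> \<not> not_steerable_BA \<rho>"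

definition not_steerable_AB :: "cmat4 \<Rightarrow> bool" where
  "not_steerable_AB \<rho> \<longleftrightarrow> (\<exists>P \<sigma> r. hv_dist P \<and> (\<forall>l. density (\<sigma> l)) \<and> response r \<and>
     (\<forall>nA MA nB MB a b. povm nA MA \<longrightarrow> povm nB MB \<longrightarrow> a < nA \<longrightarrow> b < nB \<longrightarrow>
        (\<lambda>l. P l * r nA MA a l * PQ (\<sigma> l) (MB b)) sums Pjoint (MA a) (MB b) \<rho>))"

definition steerable_AB :: "cmat4 \<Rightarrow> bool" where
  "steerable_AB \<rho> \<longleftrightarrow> \<not> not_steerable_AB \<rho>"

definition separable :: "cmat4 \<Rightarrow> bool" where
  "separable \<rho> \<longleftrightarrow> (\<exists>P \<sigma>A \<sigma>B. hv_dist P \<and> (\<forall>l. density (\<sigma>A l)) \<and> (\<forall>l. density (\<sigma>B l)) \<and>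
     (\<lambda>l. P l *\<^sub>R kron (\<sigma>A l) (\<sigma>B l)) sums \<rho>)"

definition entangled :: "cmat4 \<Rightarrow> bool" where
  "entangled \<rho> \<longleftrightarrow> \<not> separable \<rho>"

end

theory Submission imports Defs begin

lemma UNIV_22: "(UNIV::(2\<times>2) set) = {(1,1),(1,2),(2,1),(2,2)}"
  using exhaust_2 by auto

lemma sum_22: "sum f (UNIV::(2\<times>2) set) = f (1,1) + f (1,2) + f (2,1) + f (2,2)"
  unfolding UNIV_22 by (simp add: add.assoc)

lemma forall_22: "(\<forall>p::2\<times>2. P p) \<longleftrightarrow> P (1,1) \<and> P (1,2) \<and> P (2,1) \<and> P (2,2)"
  using UNIV_22 by (metis UNIV_I insertCI insertE empty_iff)

definition herm :: "complex^'n^'n \<Rightarrow> bool" where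
  "herm M \<longleftrightarrow> (\<forall>i j. M $ j $ i = cnj (M $ i $ j))"

definition qf :: "complex^'n^'n \<Rightarrow> complex^'n \<Rightarrow> complex" where
  "qf M x = (\<Sum>i\<in>UNIV. cnj (x $ i) * (M *v x) $ i)"

lemma qf_axis2: 
  fixes M :: "complex^'n^'n"
  assumes "i \<noteq> j"
  shows "qf M (axis i 1 + axis j w) = M$i$i + w * M$i$j + cnj w * M$j$i + cnj w * w * M$j$j"
proof -
  let ?x = "axis i 1 + axis j w"
  have c: "?x $ k = (if k = i then 1 else 0) + (if k = j then w else 0)" for k
    by (simp add: axis_def)
  have mv: "(M *v ?x) $ k = M$k$i + M$k$j * w" for k
  proof -
    have "(M *v ?x) $ k = (\<Sum>l\<in>UNIV. (if l = i then M$k$i else 0) + (if l = j then M$k$j * w else 0))"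
      unfolding matrix_vector_mult_def c vec_lambda_beta by (intro sum.cong) (auto simp: distrib_left)
    also have "\<dots> = M$k$i + M$k$j * w" by (simp add: sum.distrib)
    finally show ?thesis .
  qed
  have "qf M ?x = (\<Sum>k\<in>UNIV. (if k = i then (M$k$i + M$k$j * w) else 0) + (if k = j then cnj w * (M$k$i + M$k$j * w) else 0))"
    unfolding qf_def mv c by (intro sum.cong) (auto simp: distrib_right)
  also have "\<dots> = M $ i $ i + w * M $ i $ j + cnj w * M $ j $ i + cnj w * w * M $ j $ j"
    by (simp add: sum.distrib algebra_simps)
  finally show ?thesis .
qed

lemma qf_axis1: 
  fixes M :: "complex^'n^'n"
  shows "qf M (axis i 1) = M$i$i"
proof -
  have c: "axis i 1 $ k = (if k = i then 1 else 0)" for k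
    by (simp add: axis_def)
  have mv: "(M *v axis i 1) $ k = M$k$i" for k
  proof -
    have "(M *v axis i 1) $ k = (\<Sum>l\<in>UNIV. (if l = i then M$k$i else 0))"
      unfolding matrix_vector_mult_def c vec_lambda_beta by (intro sum.cong) auto
    then show ?thesis by simp
  qed
  have "qf M (axis i 1) = (\<Sum>k\<in>UNIV. (if k = i then M$k$i else 0))"
    unfolding qf_def mv c by (intro sum.cong) auto
  then show ?thesis by simp
qed

lemma psd_herm:
  fixes M :: "complex^'n^'n"
  assumes "psd M" shows "herm M"
  unfolding herm_def
proof (intro allI)
  fix i j
  have P: "Im (qf M x) = 0" for x using assms unfolding psd_def qf_def by blast
  have di: "Im (M$k$k) = 0" for k using P[of "axis k 1"] by (simp add: qf_axis1)
  show "M $ j $ i = cnj (M $ i $ j)"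
  proof (cases "i = j")
    case True then show ?thesis using di[of i] by (simp add: complex_eq_iff)
  next
    case False
    have 1: "Im (M$i$j + M$j$i) = 0" using P[of "axis i 1 + axis j 1"] qf_axis2[OF False, of M 1] di[of i] di[of j]
      by simp
    have 2: "Re (M$i$j - M$j$i) = 0" using P[of "axis i 1 + axis j \<i>"] qf_axis2[OF False, of M \<i>] di[of i] di[of j]
      by simp
    show ?thesis using 1 2 by (simp add: complex_eq_iff)
  qed
qed

definition sx :: cmat2 where "sx = (\<chi> i j. if i = j then 0 else 1)"
definition sy :: cmat2 where "sy = (\<chi> i j. if i = j then 0 else if i = 1 then -\<i> else \<i>)"
definition sz :: cmat2 where "sz = (\<chi> i j. if i = j then (if i = 1 then 1 else -1) else 0)"
definition proj :: "cmat2 \<Rightarrow> cmat2" where "proj S = (1/2::real) *\<^sub>R (mat 1 + S)"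
definition pv :: "cmat2 \<Rightarrow> nat \<Rightarrow> cmat2" where "pv Q = (\<lambda>a. if a = 0 then Q else mat 1 - Q)"

definition recon :: "real \<Rightarrow> real \<Rightarrow> real \<Rightarrow> real \<Rightarrow> cmat2" where
  "recon t1 t2 t3 t4 = (\<chi> i j. if i = 1 \<and> j = 1 then complex_of_real t2
     else if i = 2 \<and> j = 2 then complex_of_real (t1 - t2)
     else if i = 1 then Complex (t3 - t1/2) (t1/2 - t4) else Complex (t3 - t1/2) (t4 - t1/2))"

definition W :: "cmat4 \<Rightarrow> cmat2 \<Rightarrow> cmat2" where
  "W \<rho> E = (\<chi> j i. \<Sum>k\<in>UNIV. \<Sum>k'\<in>UNIV. \<rho> $ (j,k') $ (i,k) * E $ k $ k')"

lemma recon_herm: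
  assumes "herm Y"
  shows "recon (PQ Y (mat 1)) (PQ Y (proj sz)) (PQ Y (proj sx)) (PQ Y (proj sy)) = Y"
proof -
  have h: "Y$2$1 = cnj (Y$1$2)" "Im (Y$1$1) = 0" "Im (Y$2$2) = 0"
    using assms unfolding herm_def by (metis, metis complex_cnj_cancel_iff Reals_cnj_iff complex_is_Real_iff,
        metis complex_cnj_cancel_iff Reals_cnj_iff complex_is_Real_iff)
  show ?thesis
    unfolding vec_eq_iff forall_2
    by (simp add: recon_def PQ_def ctrace_def matrix_matrix_mult_def sum_2 mat_def proj_def sx_def sy_def sz_def h
        complex_eq_iff field_simps)
qed

lemma recon_lin: "recon t1 t2 t3 t4 = t1 *\<^sub>R recon 1 0 0 0 + t2 *\<^sub>R recon 0 1 0 0 + t3 *\<^sub>R recon 0 0 1 0 + t4 *\<^sub>R recon 0 0 0 1"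
  unfolding vec_eq_iff forall_2
  by (simp add: recon_def complex_eq_iff field_simps)

lemma recon_sums:
  assumes "f1 sums a1" "f2 sums a2" "f3 sums a3" "f4 sums a4"
  shows "(\<lambda>l. recon (f1 l) (f2 l) (f3 l) (f4 l)) sums recon a1 a2 a3 a4"
  unfolding recon_lin[of "f1 _"] recon_lin[of a1]
  by (intro sums_add sums_scaleR_left assms)

lemma Pjoint_W: "Pjoint M E \<rho> = PQ (W \<rho> E) M"
proof -
  have "ctrace (kron M E ** \<rho>) = ctrace (W \<rho> E ** M)"
    unfolding ctrace_def matrix_matrix_mult_def W_def kron_def
    by (simp add: sum_2 sum_22 sum_distrib_right ring_distribs mult_ac add_ac)
  then show ?thesis unfolding Pjoint_def PQ_def by simp
qed

lemma W_herm: assumes "herm \<rho>" "herm E" shows "herm (W \<rho> E)"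
  unfolding herm_def
proof (intro allI)
  fix i j
  have r: "\<rho> $ q $ p = cnj (\<rho> $ p $ q)" for p q using assms(1) unfolding herm_def by blast
  have e: "E $ q $ p = cnj (E $ p $ q)" for p q using assms(2) unfolding herm_def by blast
  have "W \<rho> E $ j $ i = (\<Sum>k\<in>UNIV. \<Sum>k'\<in>UNIV. cnj (\<rho> $ (i,k) $ (j,k') * E $ k' $ k))"
    unfolding W_def vec_lambda_beta by (subst r, subst e) simp
  also have "\<dots> = cnj (\<Sum>k\<in>UNIV. \<Sum>k'\<in>UNIV. \<rho> $ (i,k) $ (j,k') * E $ k' $ k)"
    by simp
  also have "(\<Sum>k\<in>UNIV. \<Sum>k'\<in>UNIV. \<rho> $ (i,k) $ (j,k') * E $ k' $ k) = W \<rho> E $ i $ j"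
    unfolding W_def vec_lambda_beta by (rule sum.swap)
  finally show "W \<rho> E $ j $ i = cnj (W \<rho> E $ i $ j)" .
qed

lemma psd2:
  fixes M :: cmat2
  assumes m: "M$1$1 = complex_of_real a" "M$2$2 = complex_of_real d" "M$2$1 = cnj (M$1$2)"
    and a: "0 \<le> a" "0 \<le> d" "(cmod (M$1$2))^2 \<le> a*d"
  shows "psd M"
  unfolding psd_def
proof
  fix x :: "complex^2"
  let ?z = "cnj (x$1) * M$1$2 * x$2"
  have q: "(\<Sum>i\<in>UNIV. cnj (x$i) * (M *v x)$i) = complex_of_real (a * (cmod (x$1))^2 + d*(cmod (x$2))^2 + 2 * Re ?z)"
    unfolding cmod_power2 by (simp add: matrix_vector_mult_def sum_2 m complex_eq_iff algebra_simps power2_eq_square)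
  have c: "cmod (M$1$2) \<le> sqrt (a*d)" using a(3) real_le_rsqrt by blast
  have aux: "\<And>t X::real. -t \<le> X/2 \<Longrightarrow> 0 \<le> X + 2*t" by linarith
  have "- Re ?z \<le> cmod ?z" using abs_Re_le_cmod[of ?z] by linarith
  also have "cmod ?z = cmod (x$1) * cmod (M$1$2) * cmod (x$2)" by (simp add: norm_mult)
  also have "\<dots> \<le> cmod (x$1) * sqrt (a*d) * cmod (x$2)"
    by (intro mult_right_mono mult_left_mono c) auto
  also have "\<dots> = (sqrt a * cmod (x$1)) * (sqrt d * cmod (x$2))" by (simp add: real_sqrt_mult)
  also have "\<dots> \<le> ((sqrt a * cmod (x$1))^2 + (sqrt d * cmod (x$2))^2) / 2"
    using sum_squares_bound[of "sqrt a * cmod (x$1)" "sqrt d * cmod (x$2)"] by simp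
  also have "\<dots> = (a * (cmod (x$1))^2 + d*(cmod (x$2))^2) / 2"
    using a by (simp add: power_mult_distrib)
  finally have "0 \<le> a * (cmod (x$1))^2 + d*(cmod (x$2))^2 + 2 * Re ?z" by (rule aux)
  then show "Im (\<Sum>i\<in>UNIV. cnj (x$i) * (M *v x)$i) = 0 \<and> 0 \<le> Re (\<Sum>i\<in>UNIV. cnj (x$i) * (M *v x)$i)"
    unfolding q by simp
qed

lemma povm_pv: assumes "psd Q" "psd (mat 1 - Q)" shows "povm 2 (pv Q)"
  using assms unfolding povm_def pv_def by (auto simp: numeral_2_eq_2 less_Suc_eq)

lemma psd_I: "psd (mat 1 :: cmat2)"
  by (rule psd2[where a=1 and d=1]) (auto simp: mat_def)

lemma povm_triv: "povm 1 (\<lambda>_. mat 1)"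
  unfolding povm_def using psd_I by simp

lemma psd_projs:
  "psd (proj sx)" "psd (mat 1 - proj sx)" "psd (proj sy)" "psd (mat 1 - proj sy)"
  "psd (proj sz)" "psd (mat 1 - proj sz)"
  by (rule psd2[where a="1/2" and d="1/2"] psd2[where a=1 and d=0] psd2[where a=0 and d=1];
      simp add: proj_def sx_def sy_def sz_def mat_def cmod_def power2_eq_square complex_eq_iff)+

lemma recon_scale: "c *\<^sub>R recon t1 t2 t3 t4 = recon (c*t1) (c*t2) (c*t3) (c*t4)"
  by (subst (1 2) recon_lin) (simp add: scaleR_add_right)

lemma series_W:
  assumes hr: "herm \<rho>" and ds: "\<forall>l. density (\<sigma> l)"
    and H: "\<forall>nA MA nB MB a b. povm nA MA \<longrightarrow> povm nB MB \<longrightarrow> a < nA \<longrightarrow> b < nB \<longrightarrow>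
        (\<lambda>l. P l * PQ (\<sigma> l) (MA a) * r nB MB b l) sums Pjoint (MA a) (MB b) \<rho>"
    and pB: "povm nB MB" "b < nB"
  shows "(\<lambda>l. (P l * r nB MB b l) *\<^sub>R \<sigma> l) sums W \<rho> (MB b)"
proof -
  let ?c = "\<lambda>l. P l * r nB MB b l"
  have hs: "herm (\<sigma> l)" for l using ds psd_herm unfolding density_def by blast
  have eq: "?c l *\<^sub>R \<sigma> l = recon (P l * PQ (\<sigma> l) (mat 1) * r nB MB b l) (P l * PQ (\<sigma> l) (proj sz) * r nB MB b l)
     (P l * PQ (\<sigma> l) (proj sx) * r nB MB b l) (P l * PQ (\<sigma> l) (proj sy) * r nB MB b l)" for l
    by (subst recon_herm[OF hs, symmetric]) (simp add: recon_scale mult_ac)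
  have hE: "herm (MB b)" using pB unfolding povm_def using psd_herm by blast
  have s1: "(\<lambda>l. P l * PQ (\<sigma> l) (mat 1) * r nB MB b l) sums Pjoint (mat 1) (MB b) \<rho>"
    using H[rule_format, OF povm_triv pB(1) _ pB(2), of 0] by simp
  have s2: "(\<lambda>l. P l * PQ (\<sigma> l) (proj S) * r nB MB b l) sums Pjoint (proj S) (MB b) \<rho>"
    if "psd (proj S)" "psd (mat 1 - proj S)" for S
    using H[rule_format, OF povm_pv[OF that] pB(1) _ pB(2), of 0] by (simp add: pv_def)
  have "(\<lambda>l. ?c l *\<^sub>R \<sigma> l) sums recon (Pjoint (mat 1) (MB b) \<rho>) (Pjoint (proj sz) (MB b) \<rho>)
      (Pjoint (proj sx) (MB b) \<rho>) (Pjoint (proj sy) (MB b) \<rho>)"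
    unfolding eq by (intro recon_sums s1 s2 psd_projs)
  also have "recon (Pjoint (mat 1) (MB b) \<rho>) (Pjoint (proj sz) (MB b) \<rho>)
      (Pjoint (proj sx) (MB b) \<rho>) (Pjoint (proj sy) (MB b) \<rho>) = W \<rho> (MB b)"
    unfolding Pjoint_W by (rule recon_herm[OF W_herm[OF hr hE]])
  finally show ?thesis .
qed

lemma cscale: "(c::real) *\<^sub>R (z::complex) = complex_of_real c * z"
  by (rule scaleR_conv_of_real)

lemma W_diff: "W \<rho> A - W \<rho> B = W \<rho> (A - B)"
  unfolding W_def vec_eq_iff by (simp add: sum_subtractf algebra_simps)

lemma proj_diff: "proj S - (mat 1 - proj S) = S"
  unfolding proj_def vec_eq_iff by (simp add: algebra_simps cscale)

lemma W_I: "W \<rho> (mat 1) = ptraceB \<rho>"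
  unfolding W_def ptraceB_def vec_eq_iff by (simp add: mat_def sum_2)

lemma pauli_exp: "\<rho> = (1/2::real) *\<^sub>R (kron (W \<rho> (mat 1)) (mat 1) + kron (W \<rho> sx) sx + kron (W \<rho> sy) sy + kron (W \<rho> sz) sz)"
  unfolding vec_eq_iff forall_22
  by (simp add: kron_def W_def sum_2 mat_def sx_def sy_def sz_def algebra_simps cscale)

lemma kron_scaleR_left: "kron (c *\<^sub>R A) B = c *\<^sub>R kron A B"
  unfolding kron_def vec_eq_iff by (simp add: cscale)
lemma kron_scaleR_right: "kron A (c *\<^sub>R B) = c *\<^sub>R kron A B"
  unfolding kron_def vec_eq_iff by (simp add: cscale)
lemma kron_add_left: "kron (A + A') B = kron A B + kron A' B"
  unfolding kron_def vec_eq_iff by (simp add: algebra_simps)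
lemma kron_add_right: "kron A (B + B') = kron A B + kron A B'"
  unfolding kron_def vec_eq_iff by (simp add: algebra_simps)

lemma bl_kron: "bounded_linear (\<lambda>A. kron A C)"
  unfolding linear_conv_bounded_linear[symmetric]
  by (intro linearI) (simp_all add: kron_add_left kron_scaleR_left)

lemmas sums_kron = bounded_linear.sums[OF bl_kron]

definition bob :: "real \<Rightarrow> real \<Rightarrow> real \<Rightarrow> real \<Rightarrow> cmat2" where
  "bob \<mu> x y z = (1/2::real) *\<^sub>R mat 1 + (\<mu>/2) *\<^sub>R (x *\<^sub>R sx + y *\<^sub>R sy + z *\<^sub>R sz)"

lemma bob_density:
  assumes "0 \<le> \<mu>" "\<mu> \<le> 1 / sqrt 3" "\<bar>x\<bar> \<le> 1" "\<bar>y\<bar> \<le> 1" "\<bar>z\<bar> \<le> 1"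
  shows "density (bob \<mu> x y z)"
proof -
  have m2: "\<mu>^2 \<le> 1/3"
  proof -
    have "\<mu>^2 \<le> (1 / sqrt 3)^2" using assms by (intro power_mono) auto
    also have "\<dots> = 1/3" by (simp add: power_divide)
    finally show ?thesis .
  qed
  have m1: "\<mu> \<le> 1"
  proof -
    have "1 / sqrt 3 \<le> (1::real)" by simp
    then show ?thesis using assms(2) by linarith
  qed
  have x2: "x^2 \<le> 1" "y^2 \<le> 1" "z^2 \<le> 1" using assms(3-5) by (simp_all add: abs_square_le_1)
  have mz: "\<bar>\<mu> * z\<bar> \<le> 1" using m1 assms by (simp add: abs_mult mult_le_one)
  have s3: "\<mu>^2 * (x^2 + y^2 + z^2) \<le> 1"
  proof -
    have "\<mu>^2 * (x^2 + y^2 + z^2) \<le> (1/3) * 3" using m2 x2 by (intro mult_mono) auto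
    then show ?thesis by simp
  qed
  have "psd (bob \<mu> x y z)"
  proof (rule psd2[where a="1/2 + \<mu>/2 * z" and d = "1/2 - \<mu>/2 * z"])
    show "(cmod (bob \<mu> x y z $ 1 $ 2))\<^sup>2 \<le> (1 / 2 + \<mu> / 2 * z) * (1 / 2 - \<mu> / 2 * z)"
    proof -
      have e: "bob \<mu> x y z $ 1 $ 2 = Complex (\<mu>/2 * x) (- (\<mu>/2 * y))"
        by (simp add: bob_def mat_def sx_def sy_def sz_def cscale complex_eq_iff)
      have "(cmod (bob \<mu> x y z $ 1 $ 2))\<^sup>2 = (\<mu>/2 * x)^2 + (\<mu>/2 * y)^2"
        unfolding e cmod_power2 by simp
      also have "\<dots> \<le> (1 / 2 + \<mu> / 2 * z) * (1 / 2 - \<mu> / 2 * z)"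
        using s3 by (simp add: power2_eq_square algebra_simps)
      finally show ?thesis .
    qed
  qed (use mz in \<open>simp_all add: bob_def mat_def sx_def sy_def sz_def cscale\<close>)
  moreover have "ctrace (bob \<mu> x y z) = 1"
    by (simp add: ctrace_def sum_2 bob_def mat_def sx_def sy_def sz_def cscale complex_eq_iff)
  ultimately show ?thesis unfolding density_def by simp
qed

lemma final_id:
  assumes "X = (1/2::real) *\<^sub>R (kron A (mat 1) + K)" "A' = A"
  shows "\<mu> *\<^sub>R X + (1 - \<mu>) *\<^sub>R kron A' ((1/2::real) *\<^sub>R mat 1) = (1/2::real) *\<^sub>R kron A (mat 1) + (\<mu>/2) *\<^sub>R K"
proof -
  have e: "(\<mu>/2) *\<^sub>R kron A (mat 1) + ((1 - \<mu>)/2) *\<^sub>R kron A (mat 1) = (1/2::real) *\<^sub>R kron A (mat 1)"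
    unfolding scaleR_add_left[symmetric] by (simp add: field_simps)
  show ?thesis using assms e by (simp add: kron_scaleR_right algebra_simps)
qed

lemma part1:
  assumes hr: "herm \<rho>" and mu: "0 \<le> \<mu>" "\<mu> \<le> 1/sqrt 3" and ns: "not_steerable_BA \<rho>"
  shows "separable (\<mu> *\<^sub>R \<rho> + (1 - \<mu>) *\<^sub>R kron (ptraceB \<rho>) ((1/2) *\<^sub>R mat 1))"
proof -
  obtain P \<sigma> r where hv: "hv_dist P" and ds: "\<forall>l. density (\<sigma> l)" and rs: "response r" and
    H: "\<forall>nA MA nB MB a b. povm nA MA \<longrightarrow> povm nB MB \<longrightarrow> a < nA \<longrightarrow> b < nB \<longrightarrow>
        (\<lambda>l. P l * PQ (\<sigma> l) (MA a) * r nB MB b l) sums Pjoint (MA a) (MB b) \<rho>"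
    using ns unfolding not_steerable_BA_def by blast
  define s where "s S l = r 2 (pv (proj S)) 0 l - r 2 (pv (proj S)) 1 l" for S l
  have sb: "\<bar>s S l\<bar> \<le> 1" if "psd (proj S)" "psd (mat 1 - proj S)" for S l
  proof -
    have "(\<forall>b<2. 0 \<le> r 2 (pv (proj S)) b l) \<and> (\<Sum>b<2. r 2 (pv (proj S)) b l) = 1"
      using rs povm_pv[OF that] unfolding response_def by blast
    then have "0 \<le> r 2 (pv (proj S)) 0 l" "0 \<le> r 2 (pv (proj S)) 1 l" "r 2 (pv (proj S)) 0 l + r 2 (pv (proj S)) 1 l = 1"
      by (auto simp: numeral_2_eq_2)
    then show ?thesis unfolding s_def by linarith
  qed
  have r1: "r 1 (\<lambda>_. mat 1) 0 l = 1" for l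
    using rs povm_triv unfolding response_def by fastforce
  have S0: "(\<lambda>l. P l *\<^sub>R \<sigma> l) sums W \<rho> (mat 1)"
    using series_W[OF hr ds H povm_triv, of 0] r1 by simp
  have Sk: "(\<lambda>l. (P l * s S l) *\<^sub>R \<sigma> l) sums W \<rho> S" if "psd (proj S)" "psd (mat 1 - proj S)" for S
  proof -
    have "(\<lambda>l. (P l * r 2 (pv (proj S)) 0 l) *\<^sub>R \<sigma> l - (P l * r 2 (pv (proj S)) 1 l) *\<^sub>R \<sigma> l)
       sums (W \<rho> (pv (proj S) 0) - W \<rho> (pv (proj S) 1))"
      by (intro sums_diff series_W[OF hr ds H povm_pv[OF that]]) auto
    moreover have "W \<rho> (pv (proj S) 0) - W \<rho> (pv (proj S) 1) = W \<rho> S"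
      by (simp add: pv_def W_diff proj_diff)
    moreover have "(P l * r 2 (pv (proj S)) 0 l) *\<^sub>R \<sigma> l - (P l * r 2 (pv (proj S)) 1 l) *\<^sub>R \<sigma> l
       = (P l * s S l) *\<^sub>R \<sigma> l" for l
      by (simp add: s_def scaleR_diff_left right_diff_distrib)
    ultimately show ?thesis by simp
  qed
  define B where "B l = bob \<mu> (s sx l) (s sy l) (s sz l)" for l
  have dB: "density (B l)" for l
    unfolding B_def by (intro bob_density mu sb psd_projs)
  have eqk: "P l *\<^sub>R kron (\<sigma> l) (B l) = (1/2::real) *\<^sub>R kron (P l *\<^sub>R \<sigma> l) (mat 1) + (\<mu>/2) *\<^sub>R
     (kron ((P l * s sx l) *\<^sub>R \<sigma> l) sx + kron ((P l * s sy l) *\<^sub>R \<sigma> l) sy + kron ((P l * s sz l) *\<^sub>R \<sigma> l) sz)" for l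
    by (simp add: B_def bob_def kron_add_right kron_scaleR_right kron_scaleR_left scaleR_add_right mult_ac)
  have "(\<lambda>l. P l *\<^sub>R kron (\<sigma> l) (B l)) sums ((1/2::real) *\<^sub>R kron (W \<rho> (mat 1)) (mat 1) + (\<mu>/2) *\<^sub>R (kron (W \<rho> sx) sx + kron (W \<rho> sy) sy + kron (W \<rho> sz) sz))"
    unfolding eqk by (intro sums_add sums_scaleR_right sums_kron S0 Sk psd_projs)
  also have "\<dots> = \<mu> *\<^sub>R \<rho> + (1 - \<mu>) *\<^sub>R kron (ptraceB \<rho>) ((1/2) *\<^sub>R mat 1)"
    by (rule final_id[symmetric]) (use pauli_exp[of \<rho>] in \<open>simp_all add: W_I add.assoc\<close>)
  finally show ?thesis
    unfolding separable_def using hv ds dB by blast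
qed




definition swp :: "cmat4 \<Rightarrow> cmat4" where
  "swp X = (\<chi> p q. X $ (snd p, fst p) $ (snd q, fst q))"

lemma swp_swp: "swp (swp X) = X"
  unfolding swp_def vec_eq_iff by simp

lemma swp_herm: "herm X \<Longrightarrow> herm (swp X)"
  unfolding swp_def herm_def vec_lambda_beta by blast

lemma swp_add: "swp (X + Y) = swp X + swp Y"
  unfolding swp_def vec_eq_iff by simp

lemma swp_scaleR: "swp (c *\<^sub>R X) = c *\<^sub>R swp X"
  unfolding swp_def vec_eq_iff by simp

lemma swp_kron: "swp (kron A B) = kron B A"
  unfolding swp_def kron_def vec_eq_iff by (simp add: mult.commute)

lemma ptraceB_swp: "ptraceB (swp X) = ptraceA X"
  unfolding swp_def ptraceB_def ptraceA_def vec_eq_iff by simp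

lemma Pjoint_swp: "Pjoint A B (swp X) = Pjoint B A X"
proof -
  have sw: "\<And>f. (\<Sum>p\<in>(UNIV::(2\<times>2) set). f p) = (\<Sum>p\<in>UNIV. f (prod.swap p))"
    by (rule sum.reindex_bij_witness[where i=prod.swap and j=prod.swap]) auto
  have "ctrace (kron A B ** swp X) = (\<Sum>p\<in>UNIV. \<Sum>q\<in>UNIV. kron A B $ p $ q * X $ prod.swap q $ prod.swap p)"
    unfolding ctrace_def matrix_matrix_mult_def swp_def by (simp add: prod.swap_def)
  also have "\<dots> = (\<Sum>p\<in>UNIV. \<Sum>q\<in>UNIV. kron A B $ prod.swap p $ prod.swap q * X $ q $ p)"
    by (subst sw, subst (2) sw) simp
  also have "\<dots> = ctrace (kron B A ** X)"
    unfolding ctrace_def matrix_matrix_mult_def kron_def by (simp add: mult.commute)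
  finally have "ctrace (kron A B ** swp X) = ctrace (kron B A ** X)" .
  then show ?thesis unfolding Pjoint_def by simp
qed

lemma bl_swp: "bounded_linear swp"
  unfolding linear_conv_bounded_linear[symmetric]
  by (intro linearI) (simp_all add: swp_add swp_scaleR)

lemma separable_swp: assumes "separable (swp X)" shows "separable X"
proof -
  obtain P \<sigma>A \<sigma>B where h: "hv_dist P" "\<forall>l. density (\<sigma>A l)" "\<forall>l. density (\<sigma>B l)"
    "(\<lambda>l. P l *\<^sub>R kron (\<sigma>A l) (\<sigma>B l)) sums swp X"
    using assms unfolding separable_def by blast
  have "(\<lambda>l. swp (P l *\<^sub>R kron (\<sigma>A l) (\<sigma>B l))) sums swp (swp X)"
    by (rule bounded_linear.sums[OF bl_swp h(4)])
  then have "(\<lambda>l. P l *\<^sub>R kron (\<sigma>B l) (\<sigma>A l)) sums X"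
    by (simp add: swp_swp swp_scaleR swp_kron)
  then show ?thesis unfolding separable_def using h by blast
qed

lemma ns_swp: assumes "not_steerable_AB \<rho>" shows "not_steerable_BA (swp \<rho>)"
proof -
  obtain P \<sigma> r where h: "hv_dist P" "\<forall>l. density (\<sigma> l)" "response r" and
    H: "\<forall>nA MA nB MB a b. povm nA MA \<longrightarrow> povm nB MB \<longrightarrow> a < nA \<longrightarrow> b < nB \<longrightarrow>
        (\<lambda>l. P l * r nA MA a l * PQ (\<sigma> l) (MB b)) sums Pjoint (MA a) (MB b) \<rho>"
    using assms unfolding not_steerable_AB_def by blast
  have "\<forall>nA MA nB MB a b. povm nA MA \<longrightarrow> povm nB MB \<longrightarrow> a < nA \<longrightarrow> b < nB \<longrightarrow>
        (\<lambda>l. P l * PQ (\<sigma> l) (MA a) * r nB MB b l) sums Pjoint (MA a) (MB b) (swp \<rho>)"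
  proof (intro allI impI)
    fix nA MA nB MB a b
    assume "povm nA MA" "povm nB MB" "a < nA" "b < nB"
    then have "(\<lambda>l. P l * r nB MB b l * PQ (\<sigma> l) (MA a)) sums Pjoint (MB b) (MA a) \<rho>"
      using H by blast
    then show "(\<lambda>l. P l * PQ (\<sigma> l) (MA a) * r nB MB b l) sums Pjoint (MA a) (MB b) (swp \<rho>)"
      by (simp add: Pjoint_swp mult_ac)
  qed
  then show ?thesis unfolding not_steerable_BA_def using h by blast
qed

theorem theorem1:
  fixes \<rho> :: cmat4 and \<mu>1 \<mu>2 :: real
  assumes "density \<rho>"
    and "0 \<le> \<mu>1" "\<mu>1 \<le> 1 / sqrt 3"
    and "0 \<le> \<mu>2" "\<mu>2 \<le> 1 / sqrt 3"
  shows "(entangled (\<mu>1 *\<^sub>R \<rho> + (1 - \<mu>1) *\<^sub>R kron (ptraceB \<rho>) ((1/2) *\<^sub>R mat 1))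
            \<longrightarrow> steerable_BA \<rho>)
       \<and> (entangled (\<mu>2 *\<^sub>R \<rho> + (1 - \<mu>2) *\<^sub>R kron ((1/2) *\<^sub>R mat 1) (ptraceA \<rho>))
            \<longrightarrow> steerable_AB \<rho>)"
proof -
  have hr: "herm \<rho>" using assms(1) psd_herm unfolding density_def by blast
  have 1: "entangled (\<mu>1 *\<^sub>R \<rho> + (1 - \<mu>1) *\<^sub>R kron (ptraceB \<rho>) ((1/2) *\<^sub>R mat 1)) \<longrightarrow> steerable_BA \<rho>"
    using part1[OF hr assms(2,3)] unfolding entangled_def steerable_BA_def by blast
  have 2: "entangled (\<mu>2 *\<^sub>R \<rho> + (1 - \<mu>2) *\<^sub>R kron ((1/2) *\<^sub>R mat 1) (ptraceA \<rho>)) \<longrightarrow> steerable_AB \<rho>"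
  proof
    assume e: "entangled (\<mu>2 *\<^sub>R \<rho> + (1 - \<mu>2) *\<^sub>R kron ((1/2) *\<^sub>R mat 1) (ptraceA \<rho>))"
    show "steerable_AB \<rho>" unfolding steerable_AB_def
    proof
      assume "not_steerable_AB \<rho>"
      then have "separable (\<mu>2 *\<^sub>R swp \<rho> + (1 - \<mu>2) *\<^sub>R kron (ptraceB (swp \<rho>)) ((1/2) *\<^sub>R mat 1))"
        by (intro part1 swp_herm hr assms(4,5) ns_swp)
      also have "\<mu>2 *\<^sub>R swp \<rho> + (1 - \<mu>2) *\<^sub>R kron (ptraceB (swp \<rho>)) ((1/2) *\<^sub>R mat 1)
         = swp (\<mu>2 *\<^sub>R \<rho> + (1 - \<mu>2) *\<^sub>R kron ((1/2) *\<^sub>R mat 1) (ptraceA \<rho>))"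
        by (simp add: swp_add swp_scaleR swp_kron ptraceB_swp)
      finally have "separable (\<mu>2 *\<^sub>R \<rho> + (1 - \<mu>2) *\<^sub>R kron ((1/2) *\<^sub>R mat 1) (ptraceA \<rho>))"
        by (rule separable_swp)
      then show False using e unfolding entangled_def by blast
    qed
  qed
  show ?thesis using 1 2 by blast
qed

end
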